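(* Under the standing assumptions (in particular $k\ge\frac{\tau\ln\tau}{\tau-1}$ and $r<r_{cr}$), let $\varphi(s)=r\ln\!\left(1+\frac{p}{1-p}s^k\right)-s$ and $-\beta=\max_{\eta_2\le s\le\eta_3}\varphi(s)$. Then $\beta>0$, and $\Phi(ns)\le\exp\{-(\beta+o(1))m\}$ holds uniformly for all $s\in[\eta_2,\eta_3]$ with $ns$ an integer, as $n\to\infty$.
   Context: Parameters: integer $k\ge2$, constants $\alpha>0$, $r>0$, $0<p<1$; $d=n^{\alpha}$ (treated as an integer), $m=n\ln d$, $\tau=\frac1{1-p}$, $r_{cr}=\frac1{\ln\tau}$. Standing assumptions: $(2k-1)\alpha>1$, $k\alpha\le1$, $k\ge\frac{\tau\ln\tau}{\tau-1}$, and $r<r_{cr}$. Notation: $f(s)=1+\frac{p}{1-p}\cdot\frac{s^k-d^{-k}}{1-d^{-k}}$ for $s\in[0,1]$; $B(S)=\binom{n}{S}\left(\frac1d\right)^{S}\left(1-\frac1d\right)^{n-S}$; $W(S)=f(S/n)^{rm}$; $\Phi(S)=B(S)W(S)$. Let $\alpha_0=\frac{(2k-1)\alpha-1}{2(k-1)}$, and let $\eta_2,\eta_3,\mu$ be constants with $0<\eta_2<\eta_3<1$, $\alpha_0/\alpha-\mu\eta_2^{k-1}>0$, $\mu>\frac{kpr}{1-p}$, and $r\ln(1-p)+\eta_3>0$. *)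

theory Defs
  imports "HOL-Analysis.Analysis"
begin

definition dd :: "real \<Rightarrow> nat \<Rightarrow> real" where
  "dd \<alpha> n = real n powr \<alpha>"

definition mm :: "real \<Rightarrow> nat \<Rightarrow> real" where
  "mm \<alpha> n = real n * ln (dd \<alpha> n)"

definition tau :: "real \<Rightarrow> real" where
  "tau p = 1 / (1 - p)"

definition r_cr :: "real \<Rightarrow> real" where
  "r_cr p = 1 / ln (tau p)"

definition ff :: "nat \<Rightarrow> real \<Rightarrow> real \<Rightarrow> nat \<Rightarrow> real \<Rightarrow> real" where
  "ff k \<alpha> p n s = 1 + p / (1 - p) * ((s ^ k - (dd \<alpha> n) powi (- int k)) / (1 - (dd \<alpha> n) powi (- int k)))"

definition BB :: "real \<Rightarrow> nat \<Rightarrow> nat \<Rightarrow> real" where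
  "BB \<alpha> n S = real (n choose S) * (1 / dd \<alpha> n) ^ S * (1 - 1 / dd \<alpha> n) ^ (n - S)"

definition WW :: "nat \<Rightarrow> real \<Rightarrow> real \<Rightarrow> real \<Rightarrow> nat \<Rightarrow> nat \<Rightarrow> real" where
  "WW k \<alpha> r p n S = ff k \<alpha> p n (real S / real n) powr (r * mm \<alpha> n)"

definition Phi :: "nat \<Rightarrow> real \<Rightarrow> real \<Rightarrow> real \<Rightarrow> nat \<Rightarrow> nat \<Rightarrow> real" where
  "Phi k \<alpha> r p n S = BB \<alpha> n S * WW k \<alpha> r p n S"

definition phi :: "nat \<Rightarrow> real \<Rightarrow> real \<Rightarrow> real \<Rightarrow> real" where
  "phi k r p s = r * ln (1 + p / (1 - p) * s ^ k) - s"

definition alpha0 :: "nat \<Rightarrow> real \<Rightarrow> real" where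
  "alpha0 k \<alpha> = ((2 * real k - 1) * \<alpha> - 1) / (2 * (real k - 1))"

end

theory Submission imports Defs begin

lemma chi_mono:
  fixes a y :: real
  assumes "0 < y" "y \<le> a"
  shows "(1+y)*ln(1+y)/y \<le> (1+a)*ln(1+a)/a"
proof (rule DERIV_nonneg_imp_nondecreasing[OF assms(2)])
  fix x :: real assume x: "y \<le> x" "x \<le> a"
  hence xp: "x > 0" using assms by linarith
  show "\<exists>d. ((\<lambda>x. (1+x)*ln(1+x)/x) has_real_derivative d) (at x) \<and> 0 \<le> d"
  proof (intro exI conjI)
    show "((\<lambda>x. (1+x)*ln(1+x)/x) has_real_derivative ((x - ln(1+x))/x^2)) (at x)"
    proof -
      have "((\<lambda>x. (1+x)*ln(1+x)/x) has_real_derivative ((ln(1+x) + 1)*x - (1+x)*ln(1+x))/(x*x)) (at x)"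
        using xp by (auto intro!: derivative_eq_intros)
      moreover have "((ln(1+x) + 1)*x - (1+x)*ln(1+x))/(x*x) = (x - ln(1+x))/x^2"
        by (simp add: algebra_simps power2_eq_square)
      ultimately show ?thesis by simp
    qed
    have "ln(1+x) \<le> x" using xp by (intro ln_add_one_self_le_self) simp
    thus "0 \<le> (x - ln(1+x))/x^2" by simp
  qed
qed

lemma psi_nonneg:
  fixes a y k :: real
  assumes "a > 0" "ln(1+a) \<le> k*a/(1+a)" "0 < y" "y \<le> a"
  shows "ln(1+y) \<le> k*y/(1+y)"
proof -
  have "(1+y)*ln(1+y)/y \<le> (1+a)*ln(1+a)/a" by (rule chi_mono) (use assms in auto)
  also have "\<dots> \<le> k" using assms(1,2) by (simp add: field_simps)
  finally have "(1+y)*ln(1+y) \<le> k*y" using assms(3) by (simp add: field_simps)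
  thus ?thesis using assms(3) by (simp add: field_simps)
qed

lemma R_mono:
  fixes a t :: real and n :: nat
  assumes "a > 0" "n \<ge> 1" "ln(1+a) \<le> real n*a/(1+a)" "0 < t" "t \<le> 1"
  shows "ln(1+a*t^n) \<le> t * ln(1+a)"
proof -
  have "ln(1+a*t^n)/t \<le> ln(1+a*1^n)/1"
  proof (rule DERIV_nonneg_imp_nondecreasing[OF assms(5)])
    fix x :: real assume x: "t \<le> x" "x \<le> 1"
    hence xp: "x > 0" using assms by linarith
    have pos: "1 + a*x^n > 0" using xp assms by (simp add: add_pos_nonneg)
    show "\<exists>d. ((\<lambda>x. ln(1+a*x^n)/x) has_real_derivative d) (at x) \<and> 0 \<le> d"
    proof (intro exI conjI)
      show "((\<lambda>x. ln(1+a*x^n)/x) has_real_derivative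
          ((real n * a * x^(n-1) / (1+a*x^n) * x - ln(1+a*x^n))/x^2)) (at x)"
        using xp pos by (auto intro!: derivative_eq_intros simp: field_simps power2_eq_square)
      have y1: "0 < a*x^n" using xp assms by simp
      have y2: "a*x^n \<le> a" using xp x assms by (simp add: power_le_one)
      have "ln(1+a*x^n) \<le> real n*(a*x^n)/(1+a*x^n)"
        by (rule psi_nonneg[OF assms(1) assms(3) y1 y2])
      also have "\<dots> = real n * a * x^(n-1) / (1+a*x^n) * x"
        using assms(2) by (cases n) (auto simp: field_simps)
      finally show "0 \<le> (real n * a * x^(n-1) / (1+a*x^n) * x - ln(1+a*x^n))/x^2" by simp
    qed
  qed
  thus ?thesis using assms(4) by (simp add: field_simps)
qed

lemma bound_n:
  fixes k n S :: nat and \<alpha> r p \<eta>2 \<eta>3 \<beta> :: real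
  assumes k: "k \<ge> 1" and al: "\<alpha> > 0" and r: "r > 0" and p: "0 < p" "p < 1"
    and n: "n \<ge> 2" and dbig: "real n powr \<alpha> > 1/\<eta>2"
    and e: "0 < \<eta>2" "\<eta>3 \<le> 1"
    and S: "\<eta>2 \<le> real S / real n" "real S / real n \<le> \<eta>3"
    and hphi: "phi k r p (real S / real n) \<le> - \<beta>"
  shows "Phi k \<alpha> r p n S \<le> exp (- (\<beta> + (- ln 2 / (\<alpha> * ln (real n)))) * mm \<alpha> n)"
proof -
  define s where "s = real S / real n"
  define d where "d = dd \<alpha> n"
  define m where "m = mm \<alpha> n"
  define a where "a = p/(1-p)"
  have a: "a > 0" using p by (simp add: a_def)
  have np: "real n > 0" using n by simp
  have lnn: "ln (real n) > 0" using n by simp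
  have d: "d = real n powr \<alpha>" by (simp add: d_def dd_def)
  have lnd: "ln d = \<alpha> * ln (real n)" using d by simp
  have dpos: "d > 0" using d np by simp
  have m: "m = real n * (\<alpha> * ln (real n))" by (simp add: m_def mm_def lnd[unfolded d_def])
  have mpos: "m > 0" using m np al lnn by simp
  have sge: "s \<ge> \<eta>2" "s \<le> 1" using S e by (auto simp: s_def)
  have spos: "s > 0" using sge e by linarith
  have Sn: "real S = s * real n" using np by (simp add: s_def)
  have dg: "d > 1/\<eta>2" using dbig d by simp
  have "1/d < \<eta>2" using dg e dpos by (auto simp: field_simps)
  hence ds: "1/d < s" using sge by linarith
  have "1/\<eta>2 \<ge> 1" using e sge by simp
  hence d1: "d > 1" using dg by linarith
  have B: "BB \<alpha> n S \<le> exp (real n * ln 2) * exp (- s * m)"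
  proof -
    have "BB \<alpha> n S = real (n choose S) * (1/d)^S * (1 - 1/d)^(n-S)"
      by (simp add: BB_def d_def)
    also have "\<dots> \<le> 2^n * (1/d)^S * 1"
    proof (intro mult_mono)
      show "real (n choose S) \<le> 2^n"
        using binomial_le_pow2[of n S] by (metis of_nat_le_iff of_nat_numeral of_nat_power)
      show "(1 - 1/d)^(n-S) \<le> 1" using d1 by (intro power_le_one) auto
    qed (use dpos d1 in auto)
    also have "(2::real)^n = exp (real n * ln 2)"
      by (simp add: exp_of_nat_mult)
    also have "(1/d)^S = exp (- s * m)"
    proof -
      have "(1/d)^S = exp (real S * ln (1/d))" using dpos
        by (subst exp_of_nat_mult) simp
      also have "real S * ln (1/d) = - s * m"
        using dpos Sn by (simp add: ln_div m_def mm_def d_def)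
      finally show ?thesis .
    qed
    finally show ?thesis by simp
  qed
  have W: "WW k \<alpha> r p n S \<le> exp (r * m * ln (1 + a * s^k))"
  proof -
    define \<epsilon> where "\<epsilon> = d powi (- int k)"
    have eps: "\<epsilon> = (1/d)^k" by (simp add: \<epsilon>_def power_int_minus_divide power_divide)
    have ep: "0 < \<epsilon>" using eps dpos by simp
    have e1: "\<epsilon> < 1" using eps d1 k by (simp add: power_less_one_iff)
    have es: "\<epsilon> < s^k" unfolding eps using ds dpos k by (intro power_strict_mono) auto
    have sk1: "s^k \<le> 1" using sge spos by (simp add: power_le_one)
    have q0: "0 \<le> (s^k - \<epsilon>)/(1-\<epsilon>)" using es e1 by simp
    have q1: "(s^k - \<epsilon>)/(1-\<epsilon>) \<le> s^k"
    proof -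
      have "s^k - \<epsilon> \<le> s^k * (1 - \<epsilon>)" using sk1 ep
        by (simp add: algebra_simps mult_left_le)
      thus ?thesis using e1 by (simp add: divide_le_eq)
    qed
    have ff: "ff k \<alpha> p n s = 1 + a * ((s^k - \<epsilon>)/(1-\<epsilon>))"
      by (simp add: ff_def a_def \<epsilon>_def d_def)
    have ff0: "0 \<le> ff k \<alpha> p n s" using ff a q0 by (simp del: times_divide_eq_right)
    have ff1: "ff k \<alpha> p n s \<le> 1 + a * s^k" using ff a q1 by (simp add: mult_left_mono del: times_divide_eq_right)
    have "WW k \<alpha> r p n S = ff k \<alpha> p n s powr (r * m)" by (simp add: WW_def s_def m_def)
    also have "\<dots> \<le> (1 + a * s^k) powr (r*m)"
      using r mpos ff0 ff1 by (intro powr_mono2) auto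
    also have "\<dots> = exp (r * m * ln (1 + a * s^k))"
    proof -
      have "1 + a * s^k > 0" using a spos by (simp add: add_pos_nonneg)
      thus ?thesis by (simp add: powr_def)
    qed
    finally show ?thesis .
  qed
  have W0: "0 \<le> WW k \<alpha> r p n S" by (simp add: WW_def)
  have "Phi k \<alpha> r p n S \<le> exp (real n * ln 2) * exp (- s * m) * exp (r * m * ln (1 + a * s^k))"
    unfolding Phi_def using B W W0 by (meson mult_mono exp_ge_zero mult_nonneg_nonneg order_trans)
  also have "\<dots> = exp (real n * ln 2 + m * phi k r p s)"
    by (simp add: phi_def a_def exp_add[symmetric] algebra_simps)
  also have "\<dots> \<le> exp (real n * ln 2 + m * (- \<beta>))"
    using mult_left_mono[OF hphi, of m] mpos by (simp add: s_def)
  also have "real n * ln 2 + m * (- \<beta>) = - (\<beta> + (- ln 2 / (\<alpha> * ln (real n)))) * mm \<alpha> n"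
    using al lnn np by (simp add: m_def[symmetric] m field_simps)
  finally show ?thesis .
qed

theorem lemma4p8:
  fixes k :: nat and \<alpha> r p \<eta>2 \<eta>3 \<mu> \<beta> :: real
  assumes "k \<ge> 2" and "\<alpha> > 0" and "r > 0" and "0 < p" and "p < 1"
    and "(2 * real k - 1) * \<alpha> > 1" and "real k * \<alpha> \<le> 1"
    and "real k \<ge> tau p * ln (tau p) / (tau p - 1)"
    and "r < r_cr p"
    and "0 < \<eta>2" and "\<eta>2 < \<eta>3" and "\<eta>3 < 1"
    and "alpha0 k \<alpha> / \<alpha> - \<mu> * \<eta>2 ^ (k - 1) > 0"
    and "\<mu> > real k * p * r / (1 - p)"
    and "r * ln (1 - p) + \<eta>3 > 0"
    and beta_def: "- \<beta> = (SUP s \<in> {\<eta>2..\<eta>3}. phi k r p s)"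
  shows "\<beta> > 0 \<and>
    (\<exists>g :: nat \<Rightarrow> real. g \<longlonglongrightarrow> 0 \<and>
      (\<forall>\<^sub>F n in sequentially. \<forall>S :: nat.
         \<eta>2 \<le> real S / real n \<and> real S / real n \<le> \<eta>3 \<longrightarrow>
         Phi k \<alpha> r p n S \<le> exp (- (\<beta> + g n) * mm \<alpha> n)))"
proof -
  define a where "a = p/(1-p)"
  have a: "a > 0" using assms(4,5) by (simp add: a_def)
  have tau: "tau p = 1 + a" using assms(4,5) by (simp add: tau_def a_def field_simps)
  have lnpos: "ln (1+a) > 0" using a by simp
  have rl: "r * ln (1+a) < 1"
    using assms(9) lnpos by (simp add: r_cr_def tau field_simps)
  have hk: "ln (1+a) \<le> real k * a / (1+a)"
  proof -
    have "(1+a) * ln (1+a) / a \<le> real k" using assms(8) by (simp add: tau)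
    hence "(1+a) * ln (1+a) \<le> real k * a" using a by (simp add: divide_le_eq)
    thus ?thesis using a by (simp add: field_simps)
  qed
  define c where "c = \<eta>2 * (r * ln (1+a) - 1)"
  have cneg: "c < 0" using rl assms(10) by (simp add: c_def mult_pos_neg)
  have phile: "phi k r p s \<le> c" if s: "s \<in> {\<eta>2..\<eta>3}" for s
  proof -
    have sp: "0 < s" "s \<le> 1" using s assms(10,12) by auto
    have "ln (1 + a * s^k) \<le> s * ln (1+a)"
      by (rule R_mono[OF a _ hk sp]) (use assms(1) in simp)
    hence "phi k r p s \<le> r * (s * ln (1+a)) - s"
      using assms(3) by (simp add: phi_def a_def)
    also have "\<dots> = s * (r * ln (1+a) - 1)" by (simp add: algebra_simps)
    also have "\<dots> \<le> \<eta>2 * (r * ln (1+a) - 1)"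
      using s rl by (intro mult_right_mono_neg) auto
    finally show ?thesis by (simp add: c_def)
  qed
  have ne: "{\<eta>2..\<eta>3} \<noteq> {}" using assms(11) by simp
  have bdd: "bdd_above (phi k r p ` {\<eta>2..\<eta>3})" using phile by (intro bdd_aboveI2) auto
  have "- \<beta> \<le> c" unfolding beta_def using phile ne by (intro cSUP_least) auto
  hence bpos: "\<beta> > 0" using cneg by simp
  have hphi: "phi k r p s \<le> - \<beta>" if "s \<in> {\<eta>2..\<eta>3}" for s
    unfolding beta_def using bdd that by (rule cSUP_upper2) simp
  define g :: "nat \<Rightarrow> real" where "g n = - ln 2 / (\<alpha> * ln (real n))" for n
  have lnlim: "filterlim (\<lambda>n. ln (real n)) at_top sequentially"
    by (rule filterlim_compose[OF ln_at_top filterlim_real_sequentially])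
  have alnlim: "filterlim (\<lambda>n. \<alpha> * ln (real n)) at_top sequentially"
    by (rule filterlim_tendsto_pos_mult_at_top[OF tendsto_const assms(2) lnlim])
  have glim: "g \<longlonglongrightarrow> 0" unfolding g_def
    by (rule tendsto_divide_0[OF tendsto_const filterlim_at_top_imp_at_infinity[OF alnlim]])
  have explim: "filterlim (\<lambda>n. exp (\<alpha> * ln (real n))) at_top sequentially"
    by (rule filterlim_compose[OF exp_at_top alnlim])
  have ev1: "\<forall>\<^sub>F n in sequentially. exp (\<alpha> * ln (real n)) > 1/\<eta>2"
    using explim by (simp add: filterlim_at_top_dense)
  have ev2: "\<forall>\<^sub>F n in sequentially. n \<ge> (2::nat)" by (rule eventually_ge_at_top)
  have ev: "\<forall>\<^sub>F n in sequentially. \<forall>S :: nat.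
         \<eta>2 \<le> real S / real n \<and> real S / real n \<le> \<eta>3 \<longrightarrow>
         Phi k \<alpha> r p n S \<le> exp (- (\<beta> + g n) * mm \<alpha> n)"
    using ev1 ev2
  proof eventually_elim
    case (elim n)
    have db: "real n powr \<alpha> > 1/\<eta>2" using elim by (simp add: powr_def)
    show ?case
    proof (intro allI impI)
      fix S :: nat assume S: "\<eta>2 \<le> real S / real n \<and> real S / real n \<le> \<eta>3"
      show "Phi k \<alpha> r p n S \<le> exp (- (\<beta> + g n) * mm \<alpha> n)"
        unfolding g_def
        by (rule bound_n[OF _ assms(2,3,4,5) elim(2) db assms(10) _ conjunct1[OF S] conjunct2[OF S]])
           (use assms(1,12) hphi S in auto)
    qed
  qed
  show ?thesis using bpos glim ev by blast
qed

end
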